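(* Let $d\ge2$ and let $R=(r_{ij})$ be a real $d\times d$ matrix with $r_{ii}=1$ for all $i$. Assume $R$ is not an $\mathcal S$-matrix and every principal sub-matrix of $R$ other than $R$ itself is completely-$\mathcal S$. Then for every $i\in\{1,\dots,d\}$ there exists $j\neq i$ with $r_{ij}\neq0$.
   Context: $x>0$ (resp. $x\ge0$) means all entries positive (resp. non-negative). A square matrix $M$ is an $\mathcal S$-matrix if there exists a vector $x\ge0$ with $Mx>0$; it is completely-$\mathcal S$ if all its principal sub-matrices (sub-matrices $(m_{ij})_{i,j\in I}$ for non-empty index sets $I$, including the full set) are $\mathcal S$-matrices. *)

theory Defs
  imports Main "HOL.Real"
begin

text \<open>A square matrix is represented as a function nat => nat => real; a principal
  sub-matrix is given by a non-empty index set I and consists of the entries M i j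
  with i, j in I.  A d x d matrix has index set {0..<d}.\<close>

definition S_matrix_on :: "nat set \<Rightarrow> (nat \<Rightarrow> nat \<Rightarrow> real) \<Rightarrow> bool" where
  "S_matrix_on I M \<longleftrightarrow>
     (\<exists>x :: nat \<Rightarrow> real. (\<forall>i\<in>I. x i \<ge> 0) \<and> (\<forall>i\<in>I. (\<Sum>j\<in>I. M i j * x j) > 0))"

definition completely_S_on :: "nat set \<Rightarrow> (nat \<Rightarrow> nat \<Rightarrow> real) \<Rightarrow> bool" where
  "completely_S_on I M \<longleftrightarrow> (\<forall>J. J \<subseteq> I \<and> J \<noteq> {} \<longrightarrow> S_matrix_on J M)"

end

theory Submission
  imports Defs
begin

theorem lemma1:
  fixes d :: nat and R :: "nat \<Rightarrow> nat \<Rightarrow> real"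
  assumes "d \<ge> 2"
    and "\<forall>i<d. R i i = 1"
    and "\<not> S_matrix_on {0..<d} R"
    and "\<forall>I. I \<subseteq> {0..<d} \<and> I \<noteq> {} \<and> I \<noteq> {0..<d} \<longrightarrow> completely_S_on I R"
  shows "\<forall>i<d. \<exists>j<d. j \<noteq> i \<and> R i j \<noteq> 0"
proof (rule ccontr)
  assume "\<not> ?thesis"
  then obtain i where i: "i < d" and z: "\<forall>j<d. j \<noteq> i \<longrightarrow> R i j = 0" by auto
  define I where "I = {0..<d} - {i}"
  have Isub: "I \<subseteq> {0..<d}" by (auto simp: I_def)
  have Ine: "I \<noteq> {}"
  proof
    assume "I = {}"
    hence "{0..<d} \<subseteq> {i}" by (auto simp: I_def)
    hence "card {0..<d} \<le> card {i}" by (intro card_mono) auto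
    thus False using assms(1) by simp
  qed
  have Ipr: "I \<noteq> {0..<d}"
  proof
    assume "I = {0..<d}"
    moreover have "i \<notin> I" by (simp add: I_def)
    ultimately show False using i by simp
  qed
  have finI: "finite I" by (simp add: I_def)
  have "completely_S_on I R" using assms(4) Isub Ine Ipr by blast
  hence "S_matrix_on I R" unfolding completely_S_on_def using Ine by blast
  then obtain x where x0: "\<forall>k\<in>I. x k \<ge> 0" and xp: "\<forall>k\<in>I. (\<Sum>j\<in>I. R k j * x j) > 0"
    unfolding S_matrix_on_def by blast
  define s where "s k = (\<Sum>j\<in>I. R k j * x j)" for k
  define m where "m = Min (s ` I)"
  have mpos: "m > 0"
  proof -
    have "\<forall>a\<in>s ` I. 0 < a" using xp by (simp add: s_def)
    thus ?thesis unfolding m_def using finI Ine by simp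
  qed
  have mle: "\<And>k. k \<in> I \<Longrightarrow> m \<le> s k" unfolding m_def using finI by auto
  define M where "M = (\<Sum>k\<in>I. \<bar>R k i\<bar>)"
  have M0: "M \<ge> 0" unfolding M_def by (simp add: sum_nonneg)
  have Mk: "\<And>k. k \<in> I \<Longrightarrow> \<bar>R k i\<bar> \<le> M" unfolding M_def
    using finI by (intro member_le_sum) auto
  define t where "t = m / (1 + M)"
  have tpos: "t > 0" using mpos M0 by (simp add: t_def)
  have tM: "M * t < m"
  proof -
    have e: "M * t = (M / (1 + M)) * m" by (simp add: t_def)
    have "M / (1 + M) < 1" using M0 by simp
    hence "(M / (1 + M)) * m < 1 * m" using mpos by (intro mult_strict_right_mono) auto
    thus ?thesis using e by simp
  qed
  define y where "y = x(i := t)"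
  have split: "\<And>k. (\<Sum>j\<in>{0..<d}. R k j * y j) = R k i * t + s k"
  proof -
    fix k
    have "(\<Sum>j\<in>{0..<d}. R k j * y j) = R k i * y i + (\<Sum>j\<in>I. R k j * y j)"
      unfolding I_def using i by (intro sum.remove) auto
    also have "(\<Sum>j\<in>I. R k j * y j) = s k" unfolding s_def y_def
      by (intro sum.cong) (auto simp: I_def)
    finally show "(\<Sum>j\<in>{0..<d}. R k j * y j) = R k i * t + s k" by (simp add: y_def)
  qed
  have "S_matrix_on {0..<d} R"
    unfolding S_matrix_on_def
  proof (intro exI conjI ballI)
    fix k assume k: "k \<in> {0..<d}"
    show "y k \<ge> 0" using x0 tpos k by (auto simp: y_def I_def)
    show "(\<Sum>j\<in>{0..<d}. R k j * y j) > 0"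
    proof (cases "k = i")
      case True
      have "s i = 0" unfolding s_def using z by (intro sum.neutral) (auto simp: I_def)
      thus ?thesis using True split tpos assms(2) i by simp
    next
      case False
      hence kI: "k \<in> I" using k by (auto simp: I_def)
      have "\<bar>R k i * t\<bar> \<le> M * t" using Mk[OF kI] tpos by (simp add: abs_mult mult_right_mono)
      hence "R k i * t > - m" using tM by linarith
      thus ?thesis using split[of k] mle[OF kI] by linarith
    qed
  qed
  thus False using assms(3) by blast
qed

end
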